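(* Let $a>0$, $b\ge 0$ and $n\ge 1$. Let $X_1,\dots,X_n, Y_1,\dots,Y_n$ be independent random variables with $X_i\sim N(0,a^2)$ and $Y_i\sim N(0,b^2)$ for each $i$, and set $W_i=X_i+Y_i$. Let $k$ be the (almost surely unique) index with $W_k=\max_{1\le i\le n}W_i$, and let $Q=X_k$. Then $$\mathbb{E}[Q]=\frac{a^2}{\sqrt{a^2+b^2}}\,\kappa_n=\eta\, a\,\kappa_n,\qquad \eta=\frac{a}{\sqrt{a^2+b^2}},$$ where $\kappa_n=\mathbb{E}\big[\max(Z_1,\dots,Z_n)\big]=n\int_{-\infty}^{\infty}x\,\Phi(x)^{n-1}\phi(x)\,\mathrm{d}x$ for $Z_1,\dots,Z_n$ i.i.d. standard normal, with $\phi$ and $\Phi$ the standard normal density and cumulative distribution function.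
   Context: $X_i$ models the true return (worth minus mean worth) of the $i$-th sampled item and $Y_i$ the measurement error, so $W_i$ is the measured value and $Q$ is the true return of the item that measures largest. $N(m,s^2)$ denotes the normal distribution with mean $m$ and standard deviation $s$. *)

theory Defs
  imports "HOL-Probability.Probability"
begin

text \<open>Normal distribution N(m, s^2) with standard deviation s \<ge> 0;
  for s = 0 it is the point mass at m (degenerate normal).\<close>
definition gauss_measure :: "real \<Rightarrow> real \<Rightarrow> real measure" where
  "gauss_measure m s =
     (if s = 0 then return borel m else density lborel (normal_density m s))"

definition std_normal_cdf :: "real \<Rightarrow> real" where
  "std_normal_cdf x = (LBINT t:{..x}. std_normal_density t)"

definition kappa :: "nat \<Rightarrow> real" where
  "kappa n = real n * (LBINT x. x * std_normal_cdf x ^ (n - 1) * std_normal_density x)"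

end

theory Submission
  imports Defs
begin


lemma nd_shift: "normal_density 0 b (w - x) = normal_density x b w"
  by (simp add: normal_density_def)

lemma nd_prod:
  assumes [arith]: "0 < a" "0 < b"
  shows "normal_density 0 a x * normal_density x b w =
    normal_density 0 (sqrt (a\<^sup>2 + b\<^sup>2)) w * normal_density (a\<^sup>2 * w / (a\<^sup>2 + b\<^sup>2)) (sqrt (a\<^sup>2 * b\<^sup>2 / (a\<^sup>2 + b\<^sup>2))) x"
proof -
  define \<sigma>' \<tau>' where "\<sigma>' = b\<^sup>2" and "\<tau>' = a\<^sup>2"
  then have [simp, arith]: "0 < \<sigma>'" "0 < \<tau>'"
    by simp_all
  have sqrt: "(sqrt (2 * pi * (\<sigma>' + \<tau>')) * sqrt (2 * pi * (\<sigma>' * \<tau>') / (\<sigma>' + \<tau>'))) =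
    (sqrt (2 * pi * \<sigma>') * sqrt (2 * pi * \<tau>'))"
    by (subst power_eq_iff_eq_base[symmetric, where n=2])
       (simp_all add: real_sqrt_mult[symmetric] power2_eq_square)
  have "normal_density 0 a x * normal_density x b w = normal_density 0 b (w - x) * normal_density 0 a x"
    by (simp add: nd_shift)
  also have "\<dots> = normal_density 0 (sqrt (\<sigma>' + \<tau>')) w * normal_density (\<tau>' * w / (\<sigma>' + \<tau>')) (sqrt ((\<sigma>' * \<tau>') / (\<sigma>' + \<tau>'))) x"
    apply (simp add: normal_density_def \<sigma>'_def[symmetric] \<tau>'_def[symmetric] sqrt mult_exp_exp)
    apply (simp add: divide_simps power2_eq_square)
    apply (simp add: algebra_simps)
    done
  finally show ?thesis by (simp add: \<sigma>'_def \<tau>'_def add.commute mult.commute)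
qed



lemma nn_nd_one: "0 < b \<Longrightarrow> (\<integral>\<^sup>+w. ennreal (normal_density x b w) \<partial>lborel) = 1"
  by (subst nn_integral_eq_integral) (auto simp: normal_density_nonneg)

lemma two_dim_pos:
  fixes G :: "real \<Rightarrow> real"
  assumes a: "0 < a" and b: "0 < b" and G[measurable]: "G \<in> borel_measurable borel"
    and Gb: "\<And>w. \<bar>G w\<bar> \<le> 1"
  shows "(\<integral>x. (\<integral>y. x * G (x+y) \<partial>density lborel (normal_density 0 b)) \<partial>density lborel (normal_density 0 a))
    = a\<^sup>2 / (a\<^sup>2 + b\<^sup>2) * (\<integral>w. w * G w * normal_density 0 (sqrt (a\<^sup>2 + b\<^sup>2)) w \<partial>lborel)"
proof -
  define H where "H x w = normal_density 0 a x * normal_density x b w * x * G w" for x w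
  have Hm[measurable]: "(\<lambda>(x,w). H x w) \<in> borel_measurable (lborel \<Otimes>\<^sub>M lborel)"
    unfolding H_def normal_density_def by measurable
  have inner: "(\<integral>y. x * G (x+y) \<partial>density lborel (normal_density 0 b)) = (\<integral>w. normal_density x b w * (x * G w) \<partial>lborel)" for x
  proof -
    have "(\<integral>y. x * G (x+y) \<partial>density lborel (normal_density 0 b)) = (\<integral>y. normal_density 0 b y * (x * G (x+y)) \<partial>lborel)"
      by (subst integral_density) auto
    also have "\<dots> = (\<integral>w. normal_density x b w * (x * G w) \<partial>lborel)"
      using lborel_integral_real_affine[where c=1 and t=x and f="\<lambda>w. normal_density x b w * (x * G w)"]
      by (simp add: nd_shift[of b "x + y" x for y, symmetric])
    finally show ?thesis .
  qed
  have step2: "(\<integral>x. (\<integral>y. x * G (x+y) \<partial>density lborel (normal_density 0 b)) \<partial>density lborel (normal_density 0 a))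
     = (\<integral>x. (\<integral>w. H x w \<partial>lborel) \<partial>lborel)"
  proof -
    have m: "(\<lambda>x. \<integral>w. normal_density x b w * (x * G w) \<partial>lborel) \<in> borel_measurable borel"
      unfolding normal_density_def by measurable
    show ?thesis
      apply (simp only: inner)
      apply (subst integral_density)
      apply (simp_all add: m del: integral_mult_right_zero)
      apply (rule Bochner_Integration.integral_cong[OF refl])
      apply (simp add: H_def[abs_def] integral_mult_right_zero[symmetric] mult_ac del: integral_mult_right_zero)
      done
  qed
  have Hint: "integrable (lborel \<Otimes>\<^sub>M lborel) (\<lambda>(x,w). H x w)"
  proof (rule integrableI_bounded)
    show "(\<lambda>(x,w). H x w) \<in> borel_measurable (lborel \<Otimes>\<^sub>M lborel)" by (rule Hm)
    have "(\<integral>\<^sup>+z. ennreal (norm ((\<lambda>(x,w). H x w) z)) \<partial>(lborel \<Otimes>\<^sub>M lborel))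
        = (\<integral>\<^sup>+x. (\<integral>\<^sup>+w. ennreal (norm (H x w)) \<partial>lborel) \<partial>lborel)"
      by (subst lborel.nn_integral_fst[symmetric]) auto
    also have "\<dots> \<le> (\<integral>\<^sup>+x. (\<integral>\<^sup>+w. ennreal (normal_density 0 a x * \<bar>x\<bar>) * ennreal (normal_density x b w) \<partial>lborel) \<partial>lborel)"
    proof (intro nn_integral_mono)
      fix x w
      have "norm (H x w) = normal_density 0 a x * normal_density x b w * \<bar>x\<bar> * \<bar>G w\<bar>"
        by (simp add: H_def abs_mult)
      also have "\<dots> \<le> normal_density 0 a x * normal_density x b w * \<bar>x\<bar> * 1"
        by (intro mult_left_mono Gb) auto
      finally show "ennreal (norm (H x w)) \<le> ennreal (normal_density 0 a x * \<bar>x\<bar>) * ennreal (normal_density x b w)"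
        by (simp add: ennreal_mult'[symmetric] mult_ac)
    qed
    also have "\<dots> = (\<integral>\<^sup>+x. ennreal (normal_density 0 a x * \<bar>x\<bar>) \<partial>lborel)"
      by (subst nn_integral_cmult) (auto simp: nn_nd_one[OF b])
    also have "\<dots> < \<infinity>"
      using integrable_normal_moment_abs[OF a, of 0 1] unfolding integrable_iff_bounded by simp
    finally show "(\<integral>\<^sup>+z. ennreal (norm ((\<lambda>(x,w). H x w) z)) \<partial>(lborel \<Otimes>\<^sub>M lborel)) < \<infinity>" .
  qed
  define s where "s = sqrt (a\<^sup>2 + b\<^sup>2)"
  define \<tau> where "\<tau> = sqrt (a\<^sup>2 * b\<^sup>2 / (a\<^sup>2 + b\<^sup>2))"
  have \<tau>: "0 < \<tau>" unfolding \<tau>_def using a b by (intro real_sqrt_gt_zero divide_pos_pos) (auto intro: add_pos_pos)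
  have innerx: "(\<integral>x. H x w \<partial>lborel) = a\<^sup>2 / (a\<^sup>2 + b\<^sup>2) * (w * G w * normal_density 0 s w)" for w
  proof -
    have "(\<integral>x. H x w \<partial>lborel) = (\<integral>x. (normal_density 0 s w * G w) * (normal_density (a\<^sup>2 * w / (a\<^sup>2 + b\<^sup>2)) \<tau> x * x) \<partial>lborel)"
      apply (rule Bochner_Integration.integral_cong[OF refl])
      subgoal for x by (simp add: H_def nd_prod[OF a b, of x w] s_def \<tau>_def)
      done
    also have "\<dots> = (normal_density 0 s w * G w) * (a\<^sup>2 * w / (a\<^sup>2 + b\<^sup>2))"
      by (simp only: integral_mult_right_zero integral_normal_moment_nz_1[OF \<tau>])
    finally show ?thesis by simp
  qed
  have "(\<integral>x. (\<integral>w. H x w \<partial>lborel) \<partial>lborel) = (\<integral>w. (\<integral>x. H x w \<partial>lborel) \<partial>lborel)"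
    by (rule lborel_pair.Fubini_integral[symmetric]) (rule Hint)
  also have "\<dots> = a\<^sup>2 / (a\<^sup>2 + b\<^sup>2) * (\<integral>w. w * G w * normal_density 0 s w \<partial>lborel)"
    by (simp only: innerx integral_mult_right_zero)
  finally show ?thesis using step2 by (simp add: s_def)
qed



context prob_space begin

lemma indep_integral_fubini:
  fixes h :: "'x \<times> 'x \<Rightarrow> real" and S :: "'x measure" and T :: "'x measure"
  assumes ind: "indep_var S U T V" and hm[measurable]: "h \<in> borel_measurable (S \<Otimes>\<^sub>M T)"
    and hi: "integrable M (\<lambda>\<omega>. h (U \<omega>, V \<omega>))"
  shows "(\<integral>\<omega>. h (U \<omega>, V \<omega>) \<partial>M) = (\<integral>\<omega>. (\<integral>\<omega>'. h (U \<omega>, V \<omega>') \<partial>M) \<partial>M)"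
proof -
  have U[measurable]: "U \<in> measurable M S" and V[measurable]: "V \<in> measurable M T"
    using ind unfolding indep_var_distribution_eq by auto
  have eq: "distr M S U \<Otimes>\<^sub>M distr M T V = distr M (S \<Otimes>\<^sub>M T) (\<lambda>x. (U x, V x))"
    using ind unfolding indep_var_distribution_eq by auto
  interpret PU: prob_space "distr M S U" by (rule prob_space_distr) simp
  interpret PV: prob_space "distr M T V" by (rule prob_space_distr) simp
  interpret PP: pair_prob_space "distr M S U" "distr M T V" ..
  have int2: "integrable (distr M S U \<Otimes>\<^sub>M distr M T V) h"
    unfolding eq by (subst integrable_distr_eq) (auto simp: hi)
  have "(\<integral>\<omega>. h (U \<omega>, V \<omega>) \<partial>M) = integral\<^sup>L (distr M (S \<Otimes>\<^sub>M T) (\<lambda>x. (U x, V x))) h"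
    by (subst integral_distr) auto
  also have "\<dots> = integral\<^sup>L (distr M S U \<Otimes>\<^sub>M distr M T V) h" unfolding eq ..
  also have "\<dots> = (\<integral>u. (\<integral>v. h (u, v) \<partial>distr M T V) \<partial>distr M S U)"
    by (rule PP.integral_fst'[symmetric]) (rule int2)
  also have "\<dots> = (\<integral>u. (\<integral>\<omega>'. h (u, V \<omega>') \<partial>M) \<partial>distr M S U)"
    by (intro Bochner_Integration.integral_cong refl) (subst integral_distr, auto)
  also have "\<dots> = (\<integral>\<omega>. (\<integral>\<omega>'. h (U \<omega>, V \<omega>') \<partial>M) \<partial>M)"
    by (subst integral_distr) auto
  finally show ?thesis .
qed

end


locale setting = prob_space M for M :: "'w measure" +
  fixes X Y :: "nat \<Rightarrow> 'w \<Rightarrow> real" and a b :: real and n :: nat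
  assumes a: "a > 0" and b: "b \<ge> 0" and n: "n \<ge> 1"
    and ind: "indep_vars (\<lambda>_. borel) (\<lambda>j. case j of Inl i \<Rightarrow> X i | Inr i \<Rightarrow> Y i)
           (Inl ` {1..n} \<union> Inr ` {1..n})"
    and dX: "\<And>i. i \<in> {1..n} \<Longrightarrow> distr M borel (X i) = gauss_measure 0 a"
    and dY: "\<And>i. i \<in> {1..n} \<Longrightarrow> distr M borel (Y i) = gauss_measure 0 b"
begin

abbreviation "Z \<equiv> (\<lambda>j. case j of Inl i \<Rightarrow> X i | Inr i \<Rightarrow> Y i)"
abbreviation "II \<equiv> Inl ` {1..n} \<union> Inr ` {1..n}"
definition "W i \<omega> = X i \<omega> + Y i \<omega>"

lemma Zm: "j \<in> II \<Longrightarrow> Z j \<in> borel_measurable M"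
  using ind unfolding indep_vars_def by auto

lemma Xm[measurable]: "i \<in> {1..n} \<Longrightarrow> X i \<in> borel_measurable M"
  using Zm[of "Inl i"] by auto
lemma Ym[measurable]: "i \<in> {1..n} \<Longrightarrow> Y i \<in> borel_measurable M"
  using Zm[of "Inr i"] by auto
lemma Wm[measurable]: "i \<in> {1..n} \<Longrightarrow> W i \<in> borel_measurable M"
  unfolding W_def by measurable

lemma indXY: assumes i: "i \<in> {1..n}" shows "indep_var borel (X i) borel (Y i)"
proof -
  have "indep_var (PiM {Inl i} (\<lambda>_. borel)) (\<lambda>\<omega>. restrict (\<lambda>j. Z j \<omega>) {Inl i})
                  (PiM {Inr i} (\<lambda>_. borel)) (\<lambda>\<omega>. restrict (\<lambda>j. Z j \<omega>) {Inr i})"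
    by (rule indep_var_restrict[OF ind]) (use i in auto)
  then have "indep_var borel ((\<lambda>f. f (Inl i)) \<circ> (\<lambda>\<omega>. restrict (\<lambda>j. Z j \<omega>) {Inl i}))
                  borel ((\<lambda>f. f (Inr i)) \<circ> (\<lambda>\<omega>. restrict (\<lambda>j. Z j \<omega>) {Inr i}))"
    by (rule indep_var_compose) auto
  moreover have "((\<lambda>f. f (Inl i)) \<circ> (\<lambda>\<omega>. restrict (\<lambda>j. Z j \<omega>) {Inl i})) = X i"
     "((\<lambda>f. f (Inr i)) \<circ> (\<lambda>\<omega>. restrict (\<lambda>j. Z j \<omega>) {Inr i})) = Y i"
    by (auto simp: fun_eq_iff)
  ultimately show ?thesis by simp
qed

lemma indWW: assumes i: "i \<in> {1..n}" and j: "j \<in> {1..n}" and ij: "i \<noteq> j"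
  shows "indep_var borel (W i) borel (W j)"
proof -
  have "indep_var (PiM {Inl i, Inr i} (\<lambda>_. borel)) (\<lambda>\<omega>. restrict (\<lambda>j. Z j \<omega>) {Inl i, Inr i})
                  (PiM {Inl j, Inr j} (\<lambda>_. borel)) (\<lambda>\<omega>. restrict (\<lambda>j. Z j \<omega>) {Inl j, Inr j})"
    by (rule indep_var_restrict[OF ind]) (use i j ij in auto)
  then have "indep_var borel ((\<lambda>f. f (Inl i) + f (Inr i)) \<circ> (\<lambda>\<omega>. restrict (\<lambda>j. Z j \<omega>) {Inl i, Inr i}))
                  borel ((\<lambda>f. f (Inl j) + f (Inr j)) \<circ> (\<lambda>\<omega>. restrict (\<lambda>j. Z j \<omega>) {Inl j, Inr j}))"
    by (rule indep_var_compose) auto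
  moreover have "((\<lambda>f. f (Inl i) + f (Inr i)) \<circ> (\<lambda>\<omega>. restrict (\<lambda>j. Z j \<omega>) {Inl i, Inr i})) = W i"
     "((\<lambda>f. f (Inl j) + f (Inr j)) \<circ> (\<lambda>\<omega>. restrict (\<lambda>j. Z j \<omega>) {Inl j, Inr j})) = W j"
    by (auto simp: fun_eq_iff W_def)
  ultimately show ?thesis by simp
qed

lemma indWfam:
  assumes J: "J \<subseteq> {1..n}" and f[measurable]: "f \<in> borel_measurable borel"
  shows "indep_vars (\<lambda>_. borel) (\<lambda>j \<omega>. f (W j \<omega>)) J"
proof -
  have "indep_vars (\<lambda>j. PiM {Inl j, Inr j} (\<lambda>_. borel)) (\<lambda>j \<omega>. restrict (\<lambda>i. Z i \<omega>) {Inl j, Inr j}) J"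
    by (rule indep_vars_restrict[OF ind]) (use J in \<open>auto simp: disjoint_family_on_def\<close>)
  then have "indep_vars (\<lambda>_. borel) (\<lambda>j \<omega>. (\<lambda>g. f (g (Inl j) + g (Inr j))) (restrict (\<lambda>i. Z i \<omega>) {Inl j, Inr j})) J"
    by (rule indep_vars_compose2) auto
  then show ?thesis by (simp add: W_def)
qed

lemma indUV:
  assumes k: "k \<in> {1..n}"
  shows "indep_var (PiM {Inl k, Inr k} (\<lambda>_. borel)) (\<lambda>\<omega>. restrict (\<lambda>j. Z j \<omega>) {Inl k, Inr k})
           (PiM (Inl ` ({1..n} - {k}) \<union> Inr ` ({1..n} - {k})) (\<lambda>_. borel))
           (\<lambda>\<omega>. restrict (\<lambda>j. Z j \<omega>) (Inl ` ({1..n} - {k}) \<union> Inr ` ({1..n} - {k})))"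
  by (rule indep_var_restrict[OF ind]) (use k in auto)

end


lemma nd_scale: "0 < s \<Longrightarrow> normal_density 0 s (s * y) = normal_density 0 1 y / s"
  by (simp add: normal_density_def real_sqrt_mult power_mult_distrib field_simps)

lemma nd_scale': "0 < s \<Longrightarrow> normal_density 0 s (y * s) = normal_density 0 1 y / s"
  using nd_scale[of s y] by (simp add: mult.commute)

lemma Phi_nonneg: "0 \<le> std_normal_cdf x"
  unfolding std_normal_cdf_def set_lebesgue_integral_def
  by (intro integral_nonneg_AE) (auto split: split_indicator)

lemma cdf_nd:
  assumes s: "0 < s"
  shows "measure (density lborel (normal_density 0 s)) {..w} = std_normal_cdf (w / s)"
proof -
  have int: "integrable lborel (\<lambda>x. normal_density 0 s x * indicator {..w} x)"
    using s by (intro integrable_real_mult_indicator) auto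
  have "measure (density lborel (normal_density 0 s)) {..w} = enn2real (\<integral>\<^sup>+x. ennreal (normal_density 0 s x) * indicator {..w} x \<partial>lborel)"
    by (simp add: measure_def emeasure_density)
  also have "(\<integral>\<^sup>+x. ennreal (normal_density 0 s x) * indicator {..w} x \<partial>lborel) = (\<integral>\<^sup>+x. ennreal (normal_density 0 s x * indicator {..w} x) \<partial>lborel)"
    by (intro nn_integral_cong) (auto split: split_indicator)
  also have "\<dots> = ennreal (\<integral>x. normal_density 0 s x * indicator {..w} x \<partial>lborel)"
    by (rule nn_integral_eq_integral[OF int]) auto
  also have "(\<integral>x. normal_density 0 s x * indicator {..w} x \<partial>lborel) = s * (\<integral>y. normal_density 0 s (s * y) * indicator {..w} (s * y) \<partial>lborel)"
    using lborel_integral_real_affine[where c=s and t=0 and f="\<lambda>x. normal_density 0 s x * indicator {..w} x"] s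
    by simp
  also have "\<dots> = (\<integral>y. indicator {..w/s} y * normal_density 0 1 y \<partial>lborel)"
  proof -
    have "(\<integral>y. normal_density 0 s (s * y) * indicator {..w} (s * y) \<partial>lborel) = (\<integral>y. (1/s) * (indicator {..w/s} y * normal_density 0 1 y) \<partial>lborel)"
      apply (rule Bochner_Integration.integral_cong[OF refl])
      using s by (auto simp: nd_scale nd_scale' field_simps split: split_indicator)
    then show ?thesis using s by simp
  qed
  also have "\<dots> = std_normal_cdf (w / s)"
    by (simp add: std_normal_cdf_def set_lebesgue_integral_def)
  finally show ?thesis
    by (simp add: Phi_nonneg)
qed

lemma density_singleton: "emeasure (density lborel (\<lambda>x. ennreal (normal_density 0 s x))) {x} = 0"
proof -
  have "AE x' in lborel. x' \<in> {x} \<longrightarrow> normal_density 0 s x' = 0"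
    using AE_lborel_singleton[of x] by eventually_elim auto
  then have "{x} \<in> null_sets (density lborel (\<lambda>x. ennreal (normal_density 0 s x)))"
    by (subst null_sets_density_iff) auto
  then show ?thesis by auto
qed

lemma distr_lborel_borel: "distr M lborel f = distr M borel f"
  by (rule distr_cong) auto

context setting begin

definition "s = sqrt (a\<^sup>2 + b\<^sup>2)"

lemma s_pos: "0 < s"
  using a unfolding s_def by (intro real_sqrt_gt_zero) (simp add: add_pos_nonneg)

lemma Xdist: "i \<in> {1..n} \<Longrightarrow> distr M borel (X i) = density lborel (normal_density 0 a)"
  using dX a by (simp add: gauss_measure_def)

lemma Xdistributed: "i \<in> {1..n} \<Longrightarrow> distributed M lborel (X i) (normal_density 0 a)"
  unfolding distributed_def using Xdist by (auto simp: distr_lborel_borel)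

lemma Xint: assumes i: "i \<in> {1..n}" shows "integrable M (X i)"
proof -
  have "integrable (distr M borel (X i)) (\<lambda>x. x)"
    using a by (simp add: Xdist[OF i] integrable_density integrable_normal_moment_nz_1)
  then show ?thesis using i by (subst (asm) integrable_distr_eq) auto
qed

lemma Wdist: assumes i: "i \<in> {1..n}" shows "distr M borel (W i) = density lborel (normal_density 0 s)"
proof (cases "b = 0")
  case True
  have "distr M borel (Y i) = return borel 0"
    using dY[OF i] True by (simp add: gauss_measure_def)
  then have "AE x in distr M borel (Y i). x = 0"
    by (subst \<open>distr M borel (Y i) = return borel 0\<close>) (simp add: AE_return)
  then have "AE \<omega> in M. Y i \<omega> = 0"
    using i by (subst (asm) AE_distr_iff) auto
  then have "distr M borel (W i) = distr M borel (X i)"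
    using i by (intro distr_cong_AE) (auto simp: W_def)
  moreover have "s = a" unfolding s_def using True a by simp
  ultimately show ?thesis using Xdist[OF i] by simp
next
  case False
  then have b': "0 < b" using b by simp
  have "distributed M lborel (Y i) (normal_density 0 b)"
    unfolding distributed_def using dY[OF i] False i by (auto simp: distr_lborel_borel gauss_measure_def)
  from add_indep_normal[OF indXY[OF i] a b' Xdistributed[OF i] this]
  show ?thesis by (simp add: distributed_def distr_lborel_borel W_def[abs_def] s_def)
qed

lemma cdfW: assumes i: "i \<in> {1..n}" shows "prob {\<omega> \<in> space M. W i \<omega> \<le> w} = std_normal_cdf (w / s)"
proof -
  have "prob {\<omega> \<in> space M. W i \<omega> \<le> w} = measure (distr M borel (W i)) {..w}"
    using i by (subst measure_distr) (auto intro!: arg_cong[where f=prob])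
  then show ?thesis using cdf_nd[OF s_pos] by (simp add: Wdist[OF i])
qed

lemma atomW: assumes i: "i \<in> {1..n}" shows "emeasure (distr M borel (W i)) {x} = 0"
  by (simp add: Wdist[OF i] density_singleton)

end


lemma Phi_measure: "std_normal_cdf t = measure (density lborel std_normal_density) {..t}"
  using cdf_nd[of 1 t] by simp

lemma Phi_le1: "std_normal_cdf t \<le> 1"
proof -
  interpret P: prob_space "density lborel std_normal_density" by (rule prob_space_normal_density) simp
  show ?thesis unfolding Phi_measure by (rule P.prob_le_1)
qed

lemma Phi_mono: "mono std_normal_cdf"
proof -
  interpret P: prob_space "density lborel std_normal_density" by (rule prob_space_normal_density) simp
  show ?thesis unfolding mono_def Phi_measure
    by (intro allI impI P.finite_measure_mono) auto
qed

lemma Phi_measurable[measurable]: "std_normal_cdf \<in> borel_measurable borel"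
  by (rule borel_measurable_mono[OF Phi_mono])

context prob_space begin

lemma indep_neq_AE:
  assumes ind: "indep_var borel U borel V" and atom: "\<And>x. emeasure (distr M borel V) {x} = 0"
  shows "AE \<omega> in M. (U \<omega> :: real) \<noteq> V \<omega>"
proof -
  have U[measurable]: "U \<in> borel_measurable M" and V[measurable]: "V \<in> borel_measurable M"
    using ind unfolding indep_var_distribution_eq by auto
  define h :: "real \<times> real \<Rightarrow> real" where "h = indicator {p. fst p = snd p}"
  have hm[measurable]: "h \<in> borel_measurable (borel \<Otimes>\<^sub>M borel)"
    unfolding h_def by measurable
  have hi: "integrable M (\<lambda>\<omega>. h (U \<omega>, V \<omega>))"
    by (rule integrable_const_bound[where B=1]) (auto simp: h_def split: split_indicator)
  have inner: "(\<integral>\<omega>'. h (x, V \<omega>') \<partial>M) = 0" for x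
  proof -
    have "(\<integral>\<omega>'. h (x, V \<omega>') \<partial>M) = (\<integral>\<omega>'. indicator (V -` {x} \<inter> space M) \<omega>' \<partial>M)"
      by (intro Bochner_Integration.integral_cong refl) (auto simp: h_def split: split_indicator)
    also have "\<dots> = measure M (V -` {x} \<inter> space M)"
      by (simp add: Int_absorb2)
    also have "\<dots> = measure (distr M borel V) {x}"
      by (subst measure_distr) auto
    also have "\<dots> = 0" using atom[of x] by (simp add: measure_def)
    finally show ?thesis .
  qed
  have "(\<integral>\<omega>. h (U \<omega>, V \<omega>) \<partial>M) = 0"
    by (subst indep_integral_fubini[OF ind hm hi]) (simp add: inner)
  moreover have "(\<integral>\<omega>. h (U \<omega>, V \<omega>) \<partial>M) = measure M {\<omega>\<in>space M. U \<omega> = V \<omega>}"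
  proof -
    have "(\<integral>\<omega>. h (U \<omega>, V \<omega>) \<partial>M) = (\<integral>\<omega>. indicator {\<omega>\<in>space M. U \<omega> = V \<omega>} \<omega> \<partial>M)"
      by (intro Bochner_Integration.integral_cong refl) (auto simp: h_def split: split_indicator)
    also have "\<dots> = measure M {\<omega>\<in>space M. U \<omega> = V \<omega>}"
      by (simp add: Int_absorb2)
    finally show ?thesis .
  qed
  ultimately have "emeasure M {\<omega>\<in>space M. U \<omega> = V \<omega>} = 0"
    by (simp add: emeasure_eq_measure)
  then show ?thesis
    by (subst AE_iff_measurable[OF _ refl]) auto
qed

end

context setting begin

lemma noties: "AE \<omega> in M. \<forall>i\<in>{1..n}. \<forall>j\<in>{1..n}. i \<noteq> j \<longrightarrow> W i \<omega> \<noteq> W j \<omega>"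
proof -
  have "\<And>i j. i \<in> {1..n} \<Longrightarrow> j \<in> {1..n} \<Longrightarrow> AE \<omega> in M. i \<noteq> j \<longrightarrow> W i \<omega> \<noteq> W j \<omega>"
  proof -
    fix i j assume i: "i \<in> {1..n}" and j: "j \<in> {1..n}"
    show "AE \<omega> in M. i \<noteq> j \<longrightarrow> W i \<omega> \<noteq> W j \<omega>"
    proof (cases "i = j")
      case False
      from indep_neq_AE[OF indWW[OF i j False] atomW[OF j]] show ?thesis by simp
    qed simp
  qed
  then show ?thesis
    by (simp add: AE_finite_all)
qed

end


context setting begin

lemma prodW:
  assumes J: "J \<subseteq> {1..n}"
  shows "(\<integral>\<omega>. (\<Prod>j\<in>J. if W j \<omega> \<le> w then 1 else 0) \<partial>M) = std_normal_cdf (w / s) ^ card J"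
proof -
  have fJ: "finite J" using J finite_subset by blast
  have ind': "indep_vars (\<lambda>_. borel) (\<lambda>j \<omega>. (\<lambda>x. if x \<le> w then 1 else 0 :: real) (W j \<omega>)) J"
    by (rule indWfam[OF J]) measurable
  have intj: "integrable M (\<lambda>\<omega>. if W j \<omega> \<le> w then 1 else 0 :: real)" if "j \<in> J" for j
    using that J by (intro integrable_const_bound[where B=1]) auto
  have ej: "(\<integral>\<omega>. (if W j \<omega> \<le> w then 1 else 0 :: real) \<partial>M) = std_normal_cdf (w / s)" if j: "j \<in> J" for j
  proof -
    have "(\<integral>\<omega>. (if W j \<omega> \<le> w then 1 else 0 :: real) \<partial>M) = (\<integral>\<omega>. indicator {\<omega> \<in> space M. W j \<omega> \<le> w} \<omega> \<partial>M)"
      by (intro Bochner_Integration.integral_cong refl) (auto split: split_indicator)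
    also have "\<dots> = prob {\<omega> \<in> space M. W j \<omega> \<le> w}"
      by (simp add: Int_absorb2)
    also have "\<dots> = std_normal_cdf (w / s)" using j J by (intro cdfW) auto
    finally show ?thesis .
  qed
  have "(\<integral>\<omega>. (\<Prod>j\<in>J. if W j \<omega> \<le> w then 1 else 0) \<partial>M) = (\<Prod>j\<in>J. (\<integral>\<omega>. (if W j \<omega> \<le> w then 1 else 0 :: real) \<partial>M))"
    using indep_vars_lebesgue_integral[OF fJ ind'] intj by simp
  also have "\<dots> = (\<Prod>j\<in>J. std_normal_cdf (w / s))"
    by (intro prod.cong refl ej)
  finally show ?thesis by simp
qed

lemma stepk:
  assumes k: "k \<in> {1..n}"
  shows "(\<integral>\<omega>. X k \<omega> * (\<Prod>j\<in>{1..n} - {k}. if W j \<omega> \<le> W k \<omega> then 1 else 0) \<partial>M)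
       = (\<integral>\<omega>. X k \<omega> * std_normal_cdf (W k \<omega> / s) ^ (n - 1) \<partial>M)"
proof -
  define J where "J = {1..n} - {k}"
  define A where "A = {Inl k, Inr k :: nat + nat}"
  define B where "B = Inl ` J \<union> Inr ` J"
  have J: "J \<subseteq> {1..n}" "finite J" "card J = n - 1" using k by (auto simp: J_def)
  have ind2: "indep_var (PiM A (\<lambda>_. borel)) (\<lambda>\<omega>. restrict (\<lambda>j. Z j \<omega>) A)
           (PiM B (\<lambda>_. borel)) (\<lambda>\<omega>. restrict (\<lambda>j. Z j \<omega>) B)"
    using indUV[OF k] unfolding A_def B_def J_def .
  define h :: "((nat + nat) \<Rightarrow> real) \<times> ((nat + nat) \<Rightarrow> real) \<Rightarrow> real" where
    "h = (\<lambda>(u,v). u (Inl k) * (\<Prod>j\<in>J. if v (Inl j) + v (Inr j) \<le> u (Inl k) + u (Inr k) then 1 else 0))"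
  have hm: "h \<in> borel_measurable (PiM A (\<lambda>_. borel) \<Otimes>\<^sub>M PiM B (\<lambda>_. borel))"
    unfolding h_def A_def B_def by measurable
  have hUV: "h (restrict (\<lambda>j. Z j \<omega>) A, restrict (\<lambda>j. Z j \<omega>') B)
      = X k \<omega> * (\<Prod>j\<in>J. if W j \<omega>' \<le> W k \<omega> then 1 else 0)" for \<omega> \<omega>'
    unfolding h_def A_def B_def W_def by (auto intro!: prod.cong)
  have Xkm[measurable]: "X k \<in> borel_measurable M" using k by simp
  have Wm'[measurable]: "\<And>j. j \<in> J \<Longrightarrow> W j \<in> borel_measurable M" using J(1) by auto
  have Wkm[measurable]: "W k \<in> borel_measurable M" using k by simp
  have hi: "integrable M (\<lambda>\<omega>. h (restrict (\<lambda>j. Z j \<omega>) A, restrict (\<lambda>j. Z j \<omega>) B))"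
    unfolding hUV
  proof (rule Bochner_Integration.integrable_bound[OF Xint[OF k]])
    show "(\<lambda>\<omega>. X k \<omega> * (\<Prod>j\<in>J. if W j \<omega> \<le> W k \<omega> then 1 else 0 :: real)) \<in> borel_measurable M"
      by measurable
    show "AE \<omega> in M. norm (X k \<omega> * (\<Prod>j\<in>J. if W j \<omega> \<le> W k \<omega> then 1 else 0 :: real)) \<le> norm (X k \<omega>)"
      by (intro AE_I2) (auto simp: abs_mult prod_le_1 abs_prod intro!: mult_left_le)
  qed
  have "(\<integral>\<omega>. X k \<omega> * (\<Prod>j\<in>J. if W j \<omega> \<le> W k \<omega> then 1 else 0) \<partial>M)
      = (\<integral>\<omega>. h (restrict (\<lambda>j. Z j \<omega>) A, restrict (\<lambda>j. Z j \<omega>) B) \<partial>M)"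
    by (simp only: hUV)
  also have "\<dots> = (\<integral>\<omega>. (\<integral>\<omega>'. h (restrict (\<lambda>j. Z j \<omega>) A, restrict (\<lambda>j. Z j \<omega>') B) \<partial>M) \<partial>M)"
    by (rule indep_integral_fubini[OF ind2 hm hi])
  also have "\<dots> = (\<integral>\<omega>. X k \<omega> * std_normal_cdf (W k \<omega> / s) ^ (n - 1) \<partial>M)"
    by (intro Bochner_Integration.integral_cong refl)
       (simp add: hUV prodW[OF J(1)] J(3))
  finally show ?thesis unfolding J_def .
qed

end


lemma two_dim:
  fixes G :: "real \<Rightarrow> real"
  assumes a: "0 < a" and b: "0 \<le> b" and G[measurable]: "G \<in> borel_measurable borel"
    and Gb: "\<And>w. \<bar>G w\<bar> \<le> 1"
  shows "(\<integral>x. (\<integral>y. x * G (x+y) \<partial>gauss_measure 0 b) \<partial>gauss_measure 0 a)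
    = a\<^sup>2 / (a\<^sup>2 + b\<^sup>2) * (\<integral>w. w * G w * normal_density 0 (sqrt (a\<^sup>2 + b\<^sup>2)) w \<partial>lborel)"
proof (cases "b = 0")
  case True
  have "(\<integral>x. (\<integral>y. x * G (x+y) \<partial>gauss_measure 0 b) \<partial>gauss_measure 0 a)
      = (\<integral>x. x * G x \<partial>density lborel (normal_density 0 a))"
    using True a by (simp add: gauss_measure_def integral_return)
  also have "\<dots> = (\<integral>x. normal_density 0 a x * (x * G x) \<partial>lborel)"
    by (subst integral_density) auto
  also have "\<dots> = (\<integral>w. w * G w * normal_density 0 (sqrt (a\<^sup>2 + b\<^sup>2)) w \<partial>lborel)"
    using True a by (simp add: mult_ac)
  finally show ?thesis using True a by simp
next
  case False
  then have b': "0 < b" using b by simp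
  show ?thesis
    using two_dim_pos[OF a b' G Gb] a b' by (simp add: gauss_measure_def)
qed

lemma one_dim:
  assumes s: "0 < s"
  shows "(\<integral>w. w * std_normal_cdf (w / s) ^ m * normal_density 0 s w \<partial>lborel)
     = s * (\<integral>x. x * std_normal_cdf x ^ m * std_normal_density x \<partial>lborel)"
proof -
  have "(\<integral>w. w * std_normal_cdf (w / s) ^ m * normal_density 0 s w \<partial>lborel)
      = s * (\<integral>x. (s * x) * std_normal_cdf ((s * x) / s) ^ m * normal_density 0 s (s * x) \<partial>lborel)"
    using lborel_integral_real_affine[where c=s and t=0 and f="\<lambda>w. w * std_normal_cdf (w / s) ^ m * normal_density 0 s w"] s
    by simp
  also have "\<dots> = s * (\<integral>x. x * std_normal_cdf x ^ m * std_normal_density x \<partial>lborel)"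
    using s by (simp add: nd_scale mult.assoc)
  finally show ?thesis .
qed

context setting begin

definition "GG w = std_normal_cdf (w / s) ^ (n - 1)"

lemma GG_measurable[measurable]: "GG \<in> borel_measurable borel"
  unfolding GG_def by measurable

lemma GG_bound: "\<bar>GG w\<bar> \<le> 1"
  unfolding GG_def using Phi_nonneg Phi_le1
  by (simp add: power_le_one abs_of_nonneg)

lemma stepc:
  assumes k: "k \<in> {1..n}"
  shows "(\<integral>\<omega>. X k \<omega> * GG (W k \<omega>) \<partial>M)
       = (\<integral>x. (\<integral>y. x * GG (x+y) \<partial>gauss_measure 0 b) \<partial>gauss_measure 0 a)"
proof -
  define h :: "real \<times> real \<Rightarrow> real" where "h = (\<lambda>(x,y). x * GG (x + y))"
  have hm: "h \<in> borel_measurable (borel \<Otimes>\<^sub>M borel)" unfolding h_def by measurable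
  have Xkm[measurable]: "X k \<in> borel_measurable M" using k by simp
  have Ykm[measurable]: "Y k \<in> borel_measurable M" using k by simp
  have hi: "integrable M (\<lambda>\<omega>. h (X k \<omega>, Y k \<omega>))"
  proof (rule Bochner_Integration.integrable_bound[OF Xint[OF k]])
    show "(\<lambda>\<omega>. h (X k \<omega>, Y k \<omega>)) \<in> borel_measurable M" unfolding h_def by measurable
    show "AE \<omega> in M. norm (h (X k \<omega>, Y k \<omega>)) \<le> norm (X k \<omega>)"
      by (intro AE_I2) (auto simp: h_def abs_mult GG_bound intro!: mult_left_le)
  qed
  have "(\<integral>\<omega>. X k \<omega> * GG (W k \<omega>) \<partial>M) = (\<integral>\<omega>. h (X k \<omega>, Y k \<omega>) \<partial>M)"
    by (simp add: h_def W_def)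
  also have "\<dots> = (\<integral>\<omega>. (\<integral>\<omega>'. h (X k \<omega>, Y k \<omega>') \<partial>M) \<partial>M)"
    by (rule indep_integral_fubini[OF indXY[OF k] hm hi])
  also have "\<dots> = (\<integral>\<omega>. (\<integral>y. h (X k \<omega>, y) \<partial>distr M borel (Y k)) \<partial>M)"
    by (intro Bochner_Integration.integral_cong refl) (subst integral_distr, auto simp: h_def)
  also have "\<dots> = (\<integral>x. (\<integral>y. h (x, y) \<partial>distr M borel (Y k)) \<partial>distr M borel (X k))"
  proof (rule integral_distr[of "X k" M borel "\<lambda>x. \<integral>y. h (x,y) \<partial>distr M borel (Y k)", symmetric])
    show "X k \<in> borel_measurable M" by simp
    interpret PY: prob_space "distr M borel (Y k)" by (rule prob_space_distr) simp
    show "(\<lambda>x. \<integral>y. h (x,y) \<partial>distr M borel (Y k)) \<in> borel_measurable borel"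
      unfolding h_def by measurable
  qed
  also have "\<dots> = (\<integral>x. (\<integral>y. x * GG (x+y) \<partial>gauss_measure 0 b) \<partial>gauss_measure 0 a)"
    using k by (simp add: dX dY h_def)
  finally show ?thesis .
qed

end


context setting begin

definition "kk \<omega> = (SOME k. k \<in> {1..n} \<and> X k \<omega> + Y k \<omega> = (MAX i\<in>{1..n}. X i \<omega> + Y i \<omega>))"

lemma kk_prop: "kk \<omega> \<in> {1..n} \<and> W (kk \<omega>) \<omega> = (MAX i\<in>{1..n}. W i \<omega>)"
proof -
  have "(MAX i\<in>{1..n}. W i \<omega>) \<in> (\<lambda>i. W i \<omega>) ` {1..n}"
    using n by (intro Max_in) auto
  then have "\<exists>k. k \<in> {1..n} \<and> X k \<omega> + Y k \<omega> = (MAX i\<in>{1..n}. X i \<omega> + Y i \<omega>)"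
    by (auto simp: W_def)
  from someI_ex[OF this] show ?thesis unfolding kk_def W_def .
qed

lemma Qsum:
  assumes nt: "\<forall>i\<in>{1..n}. \<forall>j\<in>{1..n}. i \<noteq> j \<longrightarrow> W i \<omega> \<noteq> W j \<omega>"
  shows "X (kk \<omega>) \<omega> = (\<Sum>k\<in>{1..n}. X k \<omega> * (\<Prod>j\<in>{1..n} - {k}. if W j \<omega> \<le> W k \<omega> then 1 else 0))"
proof -
  define \<kappa> where "\<kappa> = kk \<omega>"
  have \<kappa>: "\<kappa> \<in> {1..n}" "W \<kappa> \<omega> = (MAX i\<in>{1..n}. W i \<omega>)" using kk_prop unfolding \<kappa>_def by auto
  have le: "W j \<omega> \<le> W \<kappa> \<omega>" if "j \<in> {1..n}" for j
    using that \<kappa>(2) by (simp add: Max_ge)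
  have p: "(\<Prod>j\<in>{1..n} - {k}. if W j \<omega> \<le> W k \<omega> then 1 else 0) = (if k = \<kappa> then 1 else (0::real))"
    if k: "k \<in> {1..n}" for k
  proof (cases "k = \<kappa>")
    case True
    then show ?thesis using le by (auto intro!: prod.neutral)
  next
    case False
    have "W k \<omega> \<le> W \<kappa> \<omega>" "W k \<omega> \<noteq> W \<kappa> \<omega>" using le[OF k] nt k \<kappa>(1) False by auto
    then have "\<not> W \<kappa> \<omega> \<le> W k \<omega>" by auto
    then have "(\<Prod>j\<in>{1..n} - {k}. if W j \<omega> \<le> W k \<omega> then 1 else 0) = (0::real)"
      using \<kappa>(1) False by (intro prod_zero) (auto intro!: bexI[of _ \<kappa>])
    then show ?thesis using False by simp
  qed
  have "(\<Sum>k\<in>{1..n}. X k \<omega> * (\<Prod>j\<in>{1..n} - {k}. if W j \<omega> \<le> W k \<omega> then 1 else 0))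
      = (\<Sum>k\<in>{1..n}. X k \<omega> * (if k = \<kappa> then 1 else 0))"
    apply (rule sum.cong[OF refl])
    subgoal for k by (subst p) auto
    done
  also have "\<dots> = X \<kappa> \<omega>" using \<kappa>(1) by (simp add: if_distrib cong: if_cong)
  finally show ?thesis unfolding \<kappa>_def ..
qed

lemma Qmeas: "(\<lambda>\<omega>. X (kk \<omega>) \<omega>) \<in> borel_measurable M"
proof -
  define S where "S \<omega> = {k. k \<in> {1..n} \<and> W k \<omega> = (MAX i\<in>{1..n}. W i \<omega>)}" for \<omega>
  have kkS: "kk \<omega> = (\<lambda>T. SOME k. k \<in> T) (S \<omega>)" for \<omega>
    unfolding kk_def S_def W_def by simp
  have pre: "S -` {T} \<inter> space M \<in> sets M" if T: "T \<subseteq> {1..n}" for T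
  proof -
    have "S -` {T} \<inter> space M = {\<omega>\<in>space M. \<forall>i\<in>{1..n}. (i \<in> T) = (W i \<omega> = Max ((\<lambda>i. W i \<omega>) ` {1..n}))}"
    proof -
      have "S \<omega> = T \<longleftrightarrow> (\<forall>i\<in>{1..n}. (i \<in> T) = (W i \<omega> = Max ((\<lambda>i. W i \<omega>) ` {1..n})))" for \<omega>
        unfolding S_def set_eq_iff using T by blast
      then show ?thesis by auto
    qed
    also have "\<dots> \<in> sets M" by measurable
    finally show "S -` {T} \<inter> space M \<in> sets M" .
  qed
  have Sm: "S \<in> M \<rightarrow>\<^sub>M count_space (Pow {1..n})"
    by (subst measurable_count_space_eq2) (auto simp: pre, auto simp: S_def)
  have kkm: "kk \<in> M \<rightarrow>\<^sub>M count_space UNIV"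
    unfolding kkS by (rule measurable_compose[OF Sm]) simp
  define X' where "X' i = (if i \<in> {1..n} then X i else (\<lambda>_. 0))" for i
  have "(\<lambda>\<omega>. X' (kk \<omega>) \<omega>) \<in> borel_measurable M"
    by (rule measurable_compose_countable'[OF _ kkm]) (auto simp: X'_def)
  moreover have "X' (kk \<omega>) \<omega> = X (kk \<omega>) \<omega>" for \<omega>
    using kk_prop[of \<omega>] by (simp add: X'_def)
  ultimately show ?thesis by simp
qed

lemma summand_int:
  assumes k: "k \<in> {1..n}"
  shows "integrable M (\<lambda>\<omega>. X k \<omega> * (\<Prod>j\<in>{1..n} - {k}. if W j \<omega> \<le> W k \<omega> then 1 else 0))"
proof (rule Bochner_Integration.integrable_bound[OF Xint[OF k]])
  show "(\<lambda>\<omega>. X k \<omega> * (\<Prod>j\<in>{1..n} - {k}. if W j \<omega> \<le> W k \<omega> then 1 else 0 :: real)) \<in> borel_measurable M"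
    using k by measurable
  show "AE \<omega> in M. norm (X k \<omega> * (\<Prod>j\<in>{1..n} - {k}. if W j \<omega> \<le> W k \<omega> then 1 else 0 :: real)) \<le> norm (X k \<omega>)"
    by (intro AE_I2) (auto simp: abs_mult prod_le_1 abs_prod intro!: mult_left_le)
qed

theorem main_setting:
  assumes Qdef: "\<And>\<omega>. Q \<omega> = X (SOME k. k \<in> {1..n} \<and>
            X k \<omega> + Y k \<omega> = (MAX i\<in>{1..n}. X i \<omega> + Y i \<omega>)) \<omega>"
  shows "integrable M Q \<and> (\<integral>\<omega>. Q \<omega> \<partial>M) = a\<^sup>2 / sqrt (a\<^sup>2 + b\<^sup>2) * kappa n"
proof -
  have Qeq: "Q = (\<lambda>\<omega>. X (kk \<omega>) \<omega>)" by (simp add: fun_eq_iff Qdef kk_def)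
  define R where "R \<omega> = (\<Sum>k\<in>{1..n}. X k \<omega> * (\<Prod>j\<in>{1..n} - {k}. if W j \<omega> \<le> W k \<omega> then 1 else 0))" for \<omega>
  have Rint: "integrable M R" unfolding R_def by (rule Bochner_Integration.integrable_sum) (rule summand_int)
  have AEQR: "AE \<omega> in M. Q \<omega> = R \<omega>"
    using noties by eventually_elim (simp add: Qeq R_def Qsum)
  have Qm: "Q \<in> borel_measurable M" unfolding Qeq by (rule Qmeas)
  have Rm: "R \<in> borel_measurable M" using Rint by auto
  have Qint: "integrable M Q" using integrable_cong_AE[OF Qm Rm AEQR] Rint by simp
  define T where "T = (\<integral>x. (\<integral>y. x * GG (x+y) \<partial>gauss_measure 0 b) \<partial>gauss_measure 0 a)"
  define I where "I = (\<integral>x. x * std_normal_cdf x ^ (n - 1) * std_normal_density x \<partial>lborel)"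
  have "(\<integral>\<omega>. Q \<omega> \<partial>M) = (\<integral>\<omega>. R \<omega> \<partial>M)" by (rule integral_cong_AE[OF Qm Rm AEQR])
  also have "\<dots> = (\<Sum>k\<in>{1..n}. (\<integral>\<omega>. X k \<omega> * (\<Prod>j\<in>{1..n} - {k}. if W j \<omega> \<le> W k \<omega> then 1 else 0) \<partial>M))"
    unfolding R_def by (rule Bochner_Integration.integral_sum) (rule summand_int)
  also have "\<dots> = (\<Sum>k\<in>{1..n}. T)"
    apply (rule sum.cong[OF refl])
    subgoal premises p for k
      using stepk[OF p] stepc[OF p] unfolding T_def GG_def by simp
    done
  also have "\<dots> = n * T" by simp
  also have "T = a\<^sup>2 / (a\<^sup>2 + b\<^sup>2) * (s * I)"
    unfolding T_def I_def
    by (subst two_dim[OF a b GG_measurable GG_bound]) (simp add: s_def[symmetric] GG_def one_dim[OF s_pos])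
  finally have E: "(\<integral>\<omega>. Q \<omega> \<partial>M) = n * (a\<^sup>2 / (a\<^sup>2 + b\<^sup>2) * (s * I))" .
  have ss: "s * s = a\<^sup>2 + b\<^sup>2" unfolding s_def using a b by (simp add: add_nonneg_nonneg)
  have key: "a\<^sup>2 / (a\<^sup>2 + b\<^sup>2) * s = a\<^sup>2 / s"
    using s_pos unfolding ss[symmetric] by (simp add: field_simps)
  have "real n * (a\<^sup>2 / (a\<^sup>2 + b\<^sup>2) * (s * I)) = (a\<^sup>2 / (a\<^sup>2 + b\<^sup>2) * s) * (real n * I)"
    by (simp only: mult_ac)
  also have "\<dots> = a\<^sup>2 / s * (real n * I)" by (simp only: key)
  finally have "(\<integral>\<omega>. Q \<omega> \<partial>M) = a\<^sup>2 / sqrt (a\<^sup>2 + b\<^sup>2) * kappa n"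
    unfolding E kappa_def I_def[symmetric] s_def .
  with Qint show ?thesis by simp
qed

end

theorem mainTheorem1:
  fixes M :: "'w measure" and X Y :: "nat \<Rightarrow> 'w \<Rightarrow> real"
    and a b :: real and n :: nat and Q :: "'w \<Rightarrow> real"
  assumes "prob_space M"
    and "a > 0" and "b \<ge> 0" and "n \<ge> 1"
    and "prob_space.indep_vars M (\<lambda>_. borel)
           (\<lambda>j. case j of Inl i \<Rightarrow> X i | Inr i \<Rightarrow> Y i)
           (Inl ` {1..n} \<union> Inr ` {1..n})"
    and "\<And>i. i \<in> {1..n} \<Longrightarrow> distr M borel (X i) = gauss_measure 0 a"
    and "\<And>i. i \<in> {1..n} \<Longrightarrow> distr M borel (Y i) = gauss_measure 0 b"
    and "\<And>\<omega>. Q \<omega> = X (SOME k. k \<in> {1..n} \<and>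
            X k \<omega> + Y k \<omega> = (MAX i\<in>{1..n}. X i \<omega> + Y i \<omega>)) \<omega>"
  shows "integrable M Q
    \<and> (\<integral>\<omega>. Q \<omega> \<partial>M) = a\<^sup>2 / sqrt (a\<^sup>2 + b\<^sup>2) * kappa n
    \<and> a\<^sup>2 / sqrt (a\<^sup>2 + b\<^sup>2) * kappa n = (a / sqrt (a\<^sup>2 + b\<^sup>2)) * a * kappa n"
proof -
  interpret S: setting M X Y a b n
    using assms(1-7) by (intro setting.intro setting_axioms.intro) auto
  have "integrable M Q \<and> (\<integral>\<omega>. Q \<omega> \<partial>M) = a\<^sup>2 / sqrt (a\<^sup>2 + b\<^sup>2) * kappa n"
    by (rule S.main_setting[OF assms(8)])
  moreover have "a\<^sup>2 / sqrt (a\<^sup>2 + b\<^sup>2) * kappa n = (a / sqrt (a\<^sup>2 + b\<^sup>2)) * a * kappa n"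
    by (simp add: power2_eq_square)
  ultimately show ?thesis by simp
qed

end
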